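(* For every connected undirected unweighted graph $G=(V,E)$ on $N$ vertices and every $r>1$, we have $\mathsf{FT}_{r}^{\delta=1/2}(G)\le \frac{r}{r-1}\cdot N^5$.
   Context: Mixed $\delta$-updating on a connected undirected unweighted graph $G=(V,E)$ with $N$ vertices: each vertex holds a mutant (fitness $r>0$) or wild-type (fitness $1$); $f_S(u)$ is the fitness at $u$ when $S$ is the mutant set. At each step, with probability $\delta$ a death-Birth step: choose $v$ uniformly to die, choose a neighbor $u$ of $v$ with probability proportional to $f_S(u)$, $u$ copies its type onto $v$; with probability $1-\delta$ a Birth-death step: choose $u$ with probability proportional to $f_S(u)$ among all vertices, choose a uniformly random neighbor $v$ of $u$, $u$ copies its type onto $v$. Fixation means all vertices mutant. $\mathsf{FT}_r^\delta(G,S_0)$ is the expected time (number of steps) until fixation conditioned on fixation, starting from mutant set $S_0$; $\mathsf{FT}_r^\delta(G)=\max_{S_0}\mathsf{FT}_r^\delta(G,S_0)$ over nonempty initial mutant sets $S_0\subseteq V$. *)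

theory Defs
  imports "HOL-Analysis.Analysis"
begin

definition ugraph :: "'a set \<Rightarrow> ('a \<Rightarrow> 'a \<Rightarrow> bool) \<Rightarrow> bool" where
  "ugraph V E \<longleftrightarrow> finite V \<and> V \<noteq> {} \<and>
     (\<forall>u v. E u v \<longrightarrow> u \<in> V \<and> v \<in> V) \<and>
     (\<forall>u v. E u v \<longrightarrow> E v u) \<and> (\<forall>u. \<not> E u u)"

definition connected_graph :: "'a set \<Rightarrow> ('a \<Rightarrow> 'a \<Rightarrow> bool) \<Rightarrow> bool" where
  "connected_graph V E \<longleftrightarrow> ugraph V E \<and> (\<forall>x\<in>V. \<forall>y\<in>V. E\<^sup>*\<^sup>* x y)"

text \<open>Fitness of vertex u when S is the mutant set.\<close>
definition fit :: "real \<Rightarrow> 'a set \<Rightarrow> 'a \<Rightarrow> real" where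
  "fit r S u = (if u \<in> S then r else 1)"

text \<open>Probability that in one step of mixed delta-updating, u reproduces onto neighbour v.
  death-Birth (prob. delta): v uniform among V, then u among neighbours of v proportional to fitness.
  Birth-death (prob. 1-delta): u proportional to fitness among V, then v uniform neighbour of u.\<close>
definition pair_prob :: "'a set \<Rightarrow> ('a \<Rightarrow> 'a \<Rightarrow> bool) \<Rightarrow> real \<Rightarrow> real \<Rightarrow> 'a set \<Rightarrow> 'a \<Rightarrow> 'a \<Rightarrow> real" where
  "pair_prob V E r \<delta> S u v =
     \<delta> * ((1 / real (card V)) * (fit r S u / (\<Sum>w\<in>{w\<in>V. E v w}. fit r S w)))
   + (1 - \<delta>) * ((fit r S u / (\<Sum>w\<in>V. fit r S w)) * (1 / real (card {w\<in>V. E u w})))"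

definition copy_type :: "'a set \<Rightarrow> 'a \<Rightarrow> 'a \<Rightarrow> 'a set" where
  "copy_type S u v = (if u \<in> S then insert v S else S - {v})"

definition trans_prob :: "'a set \<Rightarrow> ('a \<Rightarrow> 'a \<Rightarrow> bool) \<Rightarrow> real \<Rightarrow> real \<Rightarrow> 'a set \<Rightarrow> 'a set \<Rightarrow> real" where
  "trans_prob V E r \<delta> S S' =
     (if S = {} \<or> S = V then (if S' = S then 1 else 0)
      else (\<Sum>(u,v)\<in>{(u,v). u \<in> V \<and> v \<in> V \<and> E u v}.
              if copy_type S u v = S' then pair_prob V E r \<delta> S u v else 0))"

fun state_dist :: "'a set \<Rightarrow> ('a \<Rightarrow> 'a \<Rightarrow> bool) \<Rightarrow> real \<Rightarrow> real \<Rightarrow> 'a set \<Rightarrow> nat \<Rightarrow> 'a set \<Rightarrow> real" where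
  "state_dist V E r \<delta> S0 0 S = (if S = S0 then 1 else 0)"
| "state_dist V E r \<delta> S0 (Suc t) S' =
     (\<Sum>S\<in>Pow V. state_dist V E r \<delta> S0 t S * trans_prob V E r \<delta> S S')"

text \<open>Probability that the fixation time T (first time all vertices are mutants) equals t.\<close>
definition fix_at :: "'a set \<Rightarrow> ('a \<Rightarrow> 'a \<Rightarrow> bool) \<Rightarrow> real \<Rightarrow> real \<Rightarrow> 'a set \<Rightarrow> nat \<Rightarrow> real" where
  "fix_at V E r \<delta> S0 t =
     (case t of 0 \<Rightarrow> state_dist V E r \<delta> S0 0 V
      | Suc s \<Rightarrow> state_dist V E r \<delta> S0 (Suc s) V - state_dist V E r \<delta> S0 s V)"

text \<open>Fixation probability (V is absorbing, so this is the limit of P(state_t = V)).\<close>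
definition fix_prob :: "'a set \<Rightarrow> ('a \<Rightarrow> 'a \<Rightarrow> bool) \<Rightarrow> real \<Rightarrow> real \<Rightarrow> 'a set \<Rightarrow> ennreal" where
  "fix_prob V E r \<delta> S0 = (SUP t. ennreal (state_dist V E r \<delta> S0 t V))"

text \<open>Expected fixation time conditioned on fixation: E[T ; fixation] / P(fixation).\<close>
definition FT :: "'a set \<Rightarrow> ('a \<Rightarrow> 'a \<Rightarrow> bool) \<Rightarrow> real \<Rightarrow> real \<Rightarrow> 'a set \<Rightarrow> ennreal" where
  "FT V E r \<delta> S0 =
     (\<Sum>t. ennreal (real t * fix_at V E r \<delta> S0 t)) / fix_prob V E r \<delta> S0"

definition FT_graph :: "'a set \<Rightarrow> ('a \<Rightarrow> 'a \<Rightarrow> bool) \<Rightarrow> real \<Rightarrow> real \<Rightarrow> ennreal" where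
  "FT_graph V E r \<delta> = (SUP S0\<in>{S0. S0 \<subseteq> V \<and> S0 \<noteq> {}}. FT V E r \<delta> S0)"

end

theory Submission
  imports Defs
begin


locale mchain =
  fixes V :: "'a set" and P :: "'a set \<Rightarrow> 'a set \<Rightarrow> real" and D :: "nat \<Rightarrow> 'a set \<Rightarrow> real"
    and S0 :: "'a set" and \<epsilon> :: real
  assumes finV: "finite V" and Vne: "V \<noteq> {}"
  and D0: "\<And>S. D 0 S = (if S = S0 then 1 else 0)"
  and DS: "\<And>t S'. D (Suc t) S' = (\<Sum>S\<in>Pow V. D t S * P S S')"
  and S0V: "S0 \<subseteq> V"
  and Pnn: "\<And>S S'. S \<subseteq> V \<Longrightarrow> 0 \<le> P S S'"
  and Psum: "\<And>S. S \<subseteq> V \<Longrightarrow> (\<Sum>S'\<in>Pow V. P S S') = 1"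
  and PV: "\<And>S'. P V S' = (if S' = V then 1 else 0)"
  and P0: "\<And>S'. P {} S' = (if S' = {} then 1 else 0)"
  and Pdrift: "\<And>S. S \<subseteq> V \<Longrightarrow> S \<noteq> {} \<Longrightarrow> S \<noteq> V \<Longrightarrow>
      real (card S) + \<epsilon> \<le> (\<Sum>S'\<in>Pow V. P S S' * real (card S'))"
  and epos: "\<epsilon> > 0"
begin

definition "X = Pow V - {{}, V}"
definition "a t = (\<Sum>S\<in>X. D t S)"
definition "m t = (\<Sum>S\<in>Pow V. D t S * real (card S))"
definition "fixat t = (case t of 0 \<Rightarrow> D 0 V | Suc s \<Rightarrow> D (Suc s) V - D s V)"

lemma finP: "finite (Pow V)" using finV by simp

lemma Dnn: "0 \<le> D t S"
proof (induction t arbitrary: S)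
  case 0 then show ?case by (simp add: D0)
next
  case (Suc t) then show ?case unfolding DS by (intro sum_nonneg mult_nonneg_nonneg Pnn) auto
qed

lemma Dsum: "(\<Sum>S\<in>Pow V. D t S) = 1"
proof (induction t)
  case 0 then show ?case using S0V finP by (simp add: D0)
next
  case (Suc t)
  have "(\<Sum>S'\<in>Pow V. D (Suc t) S') = (\<Sum>S'\<in>Pow V. \<Sum>S\<in>Pow V. D t S * P S S')" by (simp add: DS)
  also have "\<dots> = (\<Sum>S\<in>Pow V. \<Sum>S'\<in>Pow V. D t S * P S S')" by (rule sum.swap)
  also have "\<dots> = (\<Sum>S\<in>Pow V. D t S * (\<Sum>S'\<in>Pow V. P S S'))" by (simp add: sum_distrib_left)
  also have "\<dots> = (\<Sum>S\<in>Pow V. D t S)" by (intro sum.cong) (auto simp: Psum)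
  finally show ?case using Suc by simp
qed

lemma single_le: "S \<in> Pow V \<Longrightarrow> D t S * P S S' \<le> D (Suc t) S'"
  unfolding DS using finP by (intro member_le_sum) (auto intro!: mult_nonneg_nonneg Dnn Pnn)

lemma qmono1: "D t V \<le> D (Suc t) V" using single_le[of V t V] by (simp add: PV)
lemma zmono1: "D t {} \<le> D (Suc t) {}" using single_le[of "{}" t "{}"] by (simp add: P0)
lemma qmono: "t \<le> n \<Longrightarrow> D t V \<le> D n V" using qmono1 by (rule lift_Suc_mono_le)
lemma zmono: "t \<le> n \<Longrightarrow> D t {} \<le> D n {}" using zmono1 by (rule lift_Suc_mono_le)

lemma a_eq: "a t = 1 - D t V - D t {}"
proof -
  have "{} \<noteq> V" using Vne by auto
  have "(\<Sum>S\<in>Pow V. D t S) = D t V + (\<Sum>S\<in>Pow V - {V}. D t S)"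
    using finP by (subst sum.remove[of _ V]) auto
  also have "(\<Sum>S\<in>Pow V - {V}. D t S) = D t {} + (\<Sum>S\<in>Pow V - {V} - {{}}. D t S)"
    using finP \<open>{} \<noteq> V\<close> by (subst sum.remove[of _ "{}"]) auto
  also have "Pow V - {V} - {{}} = X" unfolding X_def by auto
  finally show ?thesis using Dsum[of t] unfolding a_def by simp
qed

lemma ann: "0 \<le> a t" unfolding a_def by (intro sum_nonneg Dnn)

lemma exp_card: "S \<subseteq> V \<Longrightarrow> real (card S) + (if S \<in> X then \<epsilon> else 0) \<le> (\<Sum>S'\<in>Pow V. P S S' * real (card S'))"
proof (cases "S \<in> X")
  case True then show ?thesis using Pdrift[of S] unfolding X_def by auto
next
  case False
  assume "S \<subseteq> V"
  with False have "S = {} \<or> S = V" unfolding X_def by auto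
  then show ?thesis
  proof
    assume "S = {}"
    have "(\<Sum>S'\<in>Pow V. P {} S' * real (card S')) = 0" by (intro sum.neutral) (simp add: P0)
    then show ?thesis using \<open>S = {}\<close> by (simp add: X_def)
  next
    assume "S = V"
    have "(\<Sum>S'\<in>Pow V. P V S' * real (card S')) = (\<Sum>S'\<in>Pow V. if S' = V then real (card V) else 0)"
      by (intro sum.cong) (auto simp: PV)
    also have "\<dots> = real (card V)" using finP by simp
    finally show ?thesis using \<open>S = V\<close> by (simp add: X_def)
  qed
qed

lemma m_step: "m t + \<epsilon> * a t \<le> m (Suc t)"
proof -
  have "m (Suc t) = (\<Sum>S'\<in>Pow V. \<Sum>S\<in>Pow V. D t S * P S S' * real (card S'))"
    unfolding m_def DS by (simp add: sum_distrib_right)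
  also have "\<dots> = (\<Sum>S\<in>Pow V. D t S * (\<Sum>S'\<in>Pow V. P S S' * real (card S')))"
    by (subst sum.swap) (simp add: sum_distrib_left mult.assoc)
  also have "\<dots> \<ge> (\<Sum>S\<in>Pow V. D t S * (real (card S) + (if S \<in> X then \<epsilon> else 0)))"
    by (intro sum_mono mult_left_mono exp_card Dnn) auto
  also have "(\<Sum>S\<in>Pow V. D t S * (real (card S) + (if S \<in> X then \<epsilon> else 0)))
     = (\<Sum>S\<in>Pow V. D t S * real (card S) + (if S \<in> X then \<epsilon> * D t S else 0))"
    by (intro sum.cong) (auto simp: algebra_simps)
  also have "\<dots> = m t + (\<Sum>S\<in>Pow V. if S \<in> X then \<epsilon> * D t S else 0)"
    by (simp add: sum.distrib m_def)
  also have "Pow V \<inter> X = X" unfolding X_def by auto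
  hence "(\<Sum>S\<in>Pow V. if S \<in> X then \<epsilon> * D t S else 0) = \<epsilon> * a t"
    unfolding a_def using sum.inter_restrict[OF finP, of "\<lambda>S. \<epsilon> * D t S" X] by (simp add: sum_distrib_left)
  finally show ?thesis by simp
qed

lemma m_le: "m t \<le> real (card V)"
proof -
  have "m t \<le> (\<Sum>S\<in>Pow V. D t S * real (card V))"
    unfolding m_def by (intro sum_mono mult_left_mono Dnn) (auto intro: card_mono finV)
  also have "\<dots> = real (card V)" by (simp add: sum_distrib_right[symmetric] Dsum)
  finally show ?thesis .
qed

lemma m0: "m 0 = real (card S0)"
proof -
  have "m 0 = (\<Sum>S\<in>Pow V. if S = S0 then real (card S0) else 0)"
    unfolding m_def by (intro sum.cong) (auto simp: D0)
  also have "\<dots> = real (card S0)" using S0V finP by simp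
  finally show ?thesis .
qed

lemma sum_a: "\<epsilon> * (\<Sum>t<n. a t) \<le> m n - m 0"
proof (induction n)
  case 0 then show ?case by simp
next
  case (Suc n) then show ?case using m_step[of n] by (simp add: algebra_simps)
qed

lemma sum_a_bound: "(\<Sum>t<n. a t) \<le> real (card V) / \<epsilon>"
proof -
  have "\<epsilon> * (\<Sum>t<n. a t) \<le> real (card V)" using sum_a[of n] m_le[of n] m0 by simp
  then show ?thesis using epos by (simp add: field_simps)
qed

lemma partial: "(\<Sum>t<Suc n. real t * fixat t) = real n * D n V - (\<Sum>t<n. D t V)"
proof (induction n)
  case 0 then show ?case by simp
next
  case (Suc n) then show ?case by (simp add: fixat_def algebra_simps)
qed

lemma partial_le: "(\<Sum>t<n. real t * fixat t) \<le> real (card V) / \<epsilon>"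
proof (cases n)
  case 0 then show ?thesis using epos by simp
next
  case (Suc k)
  have "(\<Sum>t<n. real t * fixat t) = (\<Sum>t<k. D k V - D t V)"
    using Suc partial[of k] by (simp add: sum_subtractf)
  also have "\<dots> \<le> (\<Sum>t<k. a t)"
  proof (intro sum_mono)
    fix t assume "t \<in> {..<k}"
    then have "D t {} \<le> D k {}" by (intro zmono) auto
    moreover have "D k V + D k {} \<le> 1" using a_eq[of k] ann[of k] by simp
    ultimately show "D k V - D t V \<le> a t" using a_eq[of t] by simp
  qed
  also have "\<dots> \<le> real (card V) / \<epsilon>" by (rule sum_a_bound)
  finally show ?thesis .
qed

lemma fixat_nn: "0 \<le> real t * fixat t"
proof (cases t)
  case 0 then show ?thesis by simp
next
  case (Suc s) then show ?thesis using qmono1[of s] by (simp add: fixat_def)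
qed

lemma G1: "(\<Sum>t. ennreal (real t * fixat t)) \<le> ennreal (real (card V) / \<epsilon>)"
  unfolding suminf_eq_SUP
proof (rule SUP_least)
  fix n
  have "(\<Sum>t<n. ennreal (real t * fixat t)) = ennreal (\<Sum>t<n. real t * fixat t)"
    using fixat_nn by (intro sum_ennreal) auto
  also have "\<dots> \<le> ennreal (real (card V) / \<epsilon>)" by (intro ennreal_leI partial_le)
  finally show "(\<Sum>t<n. ennreal (real t * fixat t)) \<le> ennreal (real (card V) / \<epsilon>)" .
qed

lemma m_mono: "m 0 \<le> m t"
proof (induction t)
  case 0 then show ?case by simp
next
  case (Suc t) then show ?case using m_step[of t] ann[of t] epos
    by (smt (verit) mult_nonneg_nonneg)
qed

lemma m_upper: "m t \<le> real (card V) * (D t V + a t)"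
proof -
  have "m t \<le> (\<Sum>S\<in>Pow V. D t S * (if S = {} then 0 else real (card V)))"
    unfolding m_def by (intro sum_mono mult_left_mono Dnn) (auto intro: card_mono finV)
  also have "\<dots> = real (card V) * (\<Sum>S\<in>Pow V - {{}}. D t S)"
    using finP by (subst sum.remove[of _ "{}"]) (auto simp: sum_distrib_left mult.commute intro!: sum.cong)
  also have "(\<Sum>S\<in>Pow V - {{}}. D t S) = 1 - D t {}"
    using finP Dsum[of t] by (subst (asm) sum.remove[of _ "{}"]) auto
  finally show ?thesis using a_eq[of t] by simp
qed

lemma small_a: "\<eta> > 0 \<Longrightarrow> \<exists>t. a t < \<eta>"
proof (rule ccontr)
  assume "\<eta> > 0" "\<not> (\<exists>t. a t < \<eta>)"
  then have ge: "\<And>t. \<eta> \<le> a t" by (simp add: not_less)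
  obtain n :: nat where n: "real (card V) / \<epsilon> / \<eta> < real n" using reals_Archimedean2 by blast
  have "real n * \<eta> \<le> (\<Sum>t<n. a t)" using sum_mono[of "{..<n}" "\<lambda>_. \<eta>" a] ge by simp
  also have "\<dots> \<le> real (card V) / \<epsilon>" by (rule sum_a_bound)
  finally have "real n * \<eta> \<le> real (card V) / \<epsilon>" .
  with n \<open>\<eta> > 0\<close> epos show False by (simp add: field_simps)
qed

lemma G2:
  assumes "S0 \<noteq> {}"
  shows "ennreal (1 / real (card V)) \<le> (SUP t. ennreal (D t V))"
proof (rule ennreal_le_epsilon)
  fix e :: real assume e: "0 < e"
  have cV: "real (card V) > 0" using finV Vne by (simp add: card_gt_0_iff)
  obtain t where t: "a t < e / real (card V)" using small_a[of "e / real (card V)"] e cV by auto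
  have "1 \<le> m 0" using m0 assms S0V finV by (simp add: Suc_le_eq card_gt_0_iff rev_finite_subset)
  also have "\<dots> \<le> m t" by (rule m_mono)
  also have "\<dots> \<le> real (card V) * (D t V + a t)" by (rule m_upper)
  finally have "1 / real (card V) \<le> D t V + a t" using cV by (simp add: field_simps)
  also have "\<dots> \<le> D t V + e / real (card V)" using t by simp
  finally have "1 / real (card V) \<le> D t V + e / real (card V)" .
  hence "ennreal (1 / real (card V)) \<le> ennreal (D t V + e / real (card V))"
    by (rule ennreal_leI)
  also have "\<dots> = ennreal (D t V) + ennreal (e / real (card V))"
    using Dnn[of t V] e cV by (intro ennreal_plus) auto
  also have "\<dots> \<le> (SUP t. ennreal (D t V)) + ennreal e"
  proof (intro add_mono)
    show "ennreal (D t V) \<le> (SUP t. ennreal (D t V))" by (rule SUP_upper) auto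
    have cV1: "1 \<le> real (card V)" using finV Vne by (simp add: Suc_le_eq card_gt_0_iff)
    have "e / real (card V) \<le> e / 1" using e cV1 by (intro divide_left_mono) auto
    then have "e / real (card V) \<le> e" by simp
    then show "ennreal (e / real (card V)) \<le> ennreal e" by (rule ennreal_leI)
  qed
  finally show "ennreal (1 / real (card V)) \<le> (SUP t. ennreal (D t V)) + ennreal e" .
qed

end

lemma inv_anti: "ennreal c \<le> (b::ennreal) \<Longrightarrow> 0 < c \<Longrightarrow> inverse b \<le> inverse (ennreal c)"
  by (cases b rule: ennreal_cases) (auto simp: inverse_ennreal intro!: ennreal_leI)
lemma div_anti: "ennreal c \<le> (b::ennreal) \<Longrightarrow> 0 < c \<Longrightarrow> a / b \<le> a / ennreal c"
  unfolding divide_ennreal_def by (intro mult_left_mono inv_anti) auto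

lemma alg:
  fixes r N F su sv du dv :: real
  assumes "r > 1" "N \<ge> 2" "N \<le> F" "F \<le> r * N" "1 \<le> du" "du \<le> N - 1" "1 \<le> dv" "dv \<le> N - 1"
    "du \<le> su" "0 < sv" "sv \<le> r * dv"
  shows "(r - 1) / (r * N ^ 3) \<le> 1/2*((1/N)*(r/sv)) + 1/2*((r/F)*(1/du)) - (1/2*((1/N)*(1/su)) + 1/2*((1/F)*(1/dv)))"
proof -
  have Fp: "F > 0" using assms by linarith
  have Np: "N > 0" using assms by linarith
  have h1: "1 / (N * dv) \<le> (1/N)*(r/sv)"
  proof -
    have "1 / (N * dv) = (1/N) * (r / (r * dv))" using assms by (simp add: field_simps)
    also have "\<dots> \<le> (1/N) * (r / sv)" using assms Np by (intro mult_left_mono divide_left_mono) auto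
    finally show ?thesis .
  qed
  have h2: "(1/N)*(1/su) \<le> 1 / (N * du)"
    using assms Np by (simp add: frac_le mult_left_mono divide_le_eq)
  have c1: "0 \<le> 1/N - 1/F" using assms Np Fp by (simp add: frac_le)
  have c2: "0 \<le> r/F - 1/N" using assms Np Fp by (simp add: field_simps)
  have "(r - 1) / (F * (N - 1)) = ((1/N - 1/F) + (r/F - 1/N)) / (N - 1)"
    using assms Fp by (simp add: field_simps)
  also have "\<dots> = (1/N - 1/F) / (N - 1) + (r/F - 1/N) / (N - 1)" by (rule add_divide_distrib)
  also have "\<dots> \<le> (1/N - 1/F) / dv + (r/F - 1/N) / du"
    using assms c1 c2 by (intro add_mono divide_left_mono) auto
  also have "\<dots> = 1 / (N * dv) - 1 / (N * du) + (r/F)*(1/du) - (1/F)*(1/dv)"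
    using assms Np Fp by (simp add: field_simps)
  finally have main: "(r - 1) / (F * (N - 1)) \<le> 1 / (N * dv) - 1 / (N * du) + (r/F)*(1/du) - (1/F)*(1/dv)" .
  have "(r - 1) / (r * N ^ 3) \<le> (r - 1) / (2 * (r * N) * (N - 1))"
  proof (intro divide_left_mono)
    have "2 * N * (N - 1) \<le> N ^ 3"
    proof -
      have "N ^ 3 - 2 * N * (N - 1) = N * ((N - 1)^2 + 1)" by (simp add: power2_eq_square power3_eq_cube algebra_simps)
      also have "\<dots> \<ge> 0" using Np by simp
      finally show ?thesis by simp
    qed
    then show "2 * (r * N) * (N - 1) \<le> r * N ^ 3" using assms by (simp add: mult.assoc mult.left_commute)
    show "0 \<le> r - 1" using assms by simp
    show "0 < r * N ^ 3 * (2 * (r * N) * (N - 1))" using assms Np by simp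
  qed
  also have "\<dots> \<le> (r - 1) / (2 * F * (N - 1))"
    using assms Fp by (intro divide_left_mono mult_right_mono) auto
  also have "\<dots> = 1/2 * ((r - 1) / (F * (N - 1)))" by simp
  also have "\<dots> \<le> 1/2 * (1 / (N * dv) - 1 / (N * du) + (r/F)*(1/du) - (1/F)*(1/dv))"
    using main by (rule mult_left_mono) simp
  also have "\<dots> \<le> 1/2*((1/N)*(r/sv)) + 1/2*((r/F)*(1/du)) - (1/2*((1/N)*(1/su)) + 1/2*((1/F)*(1/dv)))"
    using h1 h2 by simp
  finally show ?thesis .
qed


lemma alg':
  fixes r N F su sv du dv :: real
  assumes "r > 1" "N \<ge> 2" "N \<le> F" "F \<le> r * N" "1 \<le> du" "du \<le> N - 1" "1 \<le> dv" "dv \<le> N - 1"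
    "du \<le> su" "0 < sv" "sv \<le> r * dv"
  shows "(r - 1) / (r * N ^ 3) \<le> 1/2*((1/N)*(r/sv)) + (1 - 1/2)*((r/F)*(1/du)) - (1/2*((1/N)*(1/su)) + (1 - 1/2)*((1/F)*(1/dv)))"
  using alg[OF assms] by simp

context
  fixes V :: "'a set" and E :: "'a \<Rightarrow> 'a \<Rightarrow> bool" and r :: real
  assumes cg: "connected_graph V E" and r1: "r > 1"
begin

definition "Ed = {(u,v). u \<in> V \<and> v \<in> V \<and> E u v}"

lemma ug: "ugraph V E" using cg unfolding connected_graph_def by auto
lemma finV: "finite V" using ug unfolding ugraph_def by auto
lemma Vne: "V \<noteq> {}" using ug unfolding ugraph_def by auto
lemma EV: "E u v \<Longrightarrow> u \<in> V \<and> v \<in> V" using ug unfolding ugraph_def by auto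
lemma Esym: "E u v \<Longrightarrow> E v u" using ug unfolding ugraph_def by auto
lemma Eirr: "\<not> E u u" using ug unfolding ugraph_def by auto
lemma conn: "x \<in> V \<Longrightarrow> y \<in> V \<Longrightarrow> E\<^sup>*\<^sup>* x y" using cg unfolding connected_graph_def by auto

lemma finEd: "finite Ed"
proof -
  have "Ed \<subseteq> V \<times> V" unfolding Ed_def by auto
  moreover have "finite (V \<times> V)" using finV by simp
  ultimately show ?thesis by (rule finite_subset)
qed

lemma finnb: "finite {w\<in>V. E u w}" using finV by simp

lemma Ed_Sigma: "Ed = (SIGMA u:V. {w\<in>V. E u w})" unfolding Ed_def by auto

lemma Ed_swap: "sum h Ed = sum (\<lambda>p. h (snd p, fst p)) Ed"
  by (rule sum.reindex_bij_witness[where i=prod.swap and j=prod.swap]) (auto simp: Ed_def Esym)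

lemma fit_pos: "0 < fit r (S :: 'a set) w" using r1 unfolding fit_def by auto
lemma fit_ge1: "1 \<le> fit r (S :: 'a set) w" using r1 unfolding fit_def by auto
lemma fit_ler: "fit r (S :: 'a set) w \<le> r" using r1 unfolding fit_def by auto

lemma crossing:
  assumes "x \<in> S" "y \<notin> S" "E\<^sup>*\<^sup>* x y"
  shows "\<exists>u v. u \<in> S \<and> v \<notin> S \<and> E u v"
  using assms(3,1,2)
proof (induction rule: rtranclp_induct)
  case base then show ?case by simp
next
  case (step y z)
  show ?case
  proof (cases "y \<in> S")
    case True then show ?thesis using step by blast
  next
    case False then show ?thesis using step by blast
  qed
qed

lemma has_nb:
  assumes "S \<subseteq> V" "S \<noteq> {}" "S \<noteq> V" "u \<in> V"
  shows "\<exists>w. E u w"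
proof -
  obtain x where x: "x \<in> S" using assms by auto
  obtain y where y: "y \<in> V" "y \<notin> S" using assms by auto
  obtain w where w: "w \<in> V" "w \<noteq> u" using x y assms(1) by (metis subsetD)
  have "E\<^sup>*\<^sup>* u w" using conn w assms(4) by auto
  then show ?thesis using w(2) by (metis converse_rtranclpE)
qed

lemma deg_pos:
  assumes "S \<subseteq> V" "S \<noteq> {}" "S \<noteq> V" "u \<in> V"
  shows "0 < card {w\<in>V. E u w}"
proof -
  obtain w where "E u w" using has_nb[OF assms] by blast
  then have "w \<in> {w\<in>V. E u w}" using EV by auto
  then show ?thesis using finnb by (auto simp: card_gt_0_iff)
qed

lemma Pkey:
  assumes "S \<subseteq> V" "S \<noteq> {}" "S \<noteq> V"
  shows "(\<Sum>S'\<in>Pow V. trans_prob V E r (1/2) S S' * g S') =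
         (\<Sum>p\<in>Ed. pair_prob V E r (1/2) S (fst p) (snd p) * g (copy_type S (fst p) (snd p)))"
proof -
  let ?pp = "\<lambda>p. pair_prob V E r (1/2) S (fst p) (snd p)"
  let ?c = "\<lambda>p. copy_type S (fst p) (snd p)"
  have tp: "trans_prob V E r (1/2) S S' = (\<Sum>p\<in>Ed. if ?c p = S' then ?pp p else 0)" for S'
    unfolding trans_prob_def Ed_def using assms by (simp add: case_prod_beta)
  have "(\<Sum>S'\<in>Pow V. trans_prob V E r (1/2) S S' * g S') =
        (\<Sum>S'\<in>Pow V. \<Sum>p\<in>Ed. if ?c p = S' then ?pp p * g S' else 0)"
    unfolding tp sum_distrib_right by (intro sum.cong) auto
  also have "\<dots> = (\<Sum>p\<in>Ed. \<Sum>S'\<in>Pow V. if ?c p = S' then ?pp p * g S' else 0)"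
    by (rule sum.swap)
  also have "\<dots> = (\<Sum>p\<in>Ed. ?pp p * g (?c p))"
  proof (intro sum.cong refl)
    fix p assume "p \<in> Ed"
    then have "?c p \<in> Pow V" using assms(1) unfolding Ed_def copy_type_def by auto
    then show "(\<Sum>S'\<in>Pow V. if ?c p = S' then ?pp p * g S' else 0) = ?pp p * g (?c p)"
      using finV by (simp add: sum.delta)
  qed
  finally show ?thesis .
qed

lemma sum_Ed: "sum g Ed = (\<Sum>u\<in>V. \<Sum>v\<in>{w\<in>V. E u w}. g (u,v))"
proof -
  have "(\<Sum>u\<in>V. \<Sum>v\<in>{w\<in>V. E u w}. g (u,v)) = (\<Sum>(u,v)\<in>Ed. g (u,v))"
    unfolding Ed_Sigma by (rule sum.Sigma) (use finV finnb in auto)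
  then show ?thesis by simp
qed

lemma pp_sum:
  assumes "S \<subseteq> V" "S \<noteq> {}" "S \<noteq> V"
  shows "(\<Sum>p\<in>Ed. pair_prob V E r (1/2) S (fst p) (snd p)) = 1"
proof -
  define N where "N = real (card V)"
  define F where "F = (\<Sum>w\<in>V. fit r S w)"
  define Sf where "Sf = (\<lambda>v. \<Sum>w\<in>{w\<in>V. E v w}. fit r S w)"
  define d where "d = (\<lambda>u. real (card {w\<in>V. E u w}))"
  have Fpos: "F > 0" unfolding F_def using finV Vne fit_pos by (intro sum_pos) auto
  have Sfpos: "Sf v > 0" if vV: "v \<in> V" for v
  proof -
    obtain w where "E v w" using has_nb[OF assms vV] by blast
    then have "{w\<in>V. E v w} \<noteq> {}" using EV by auto
    then show ?thesis unfolding Sf_def using finnb fit_pos by (intro sum_pos) auto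
  qed
  have dpos: "d u > 0" if "u \<in> V" for u using deg_pos[OF assms that] unfolding d_def by simp
  have Npos: "N > 0" unfolding N_def using finV Vne by (simp add: card_gt_0_iff)
  have pp: "pair_prob V E r (1/2) S u v = 1/2 * ((1 / N) * (fit r S u / Sf v)) + 1/2 * ((fit r S u / F) * (1 / d u))" for u v
    unfolding pair_prob_def N_def F_def Sf_def d_def by simp
  have A: "(\<Sum>p\<in>Ed. 1/2 * ((1 / N) * (fit r S (fst p) / Sf (snd p)))) = 1/2"
  proof -
    have "(\<Sum>p\<in>Ed. 1/2 * ((1 / N) * (fit r S (fst p) / Sf (snd p))))
        = (\<Sum>p\<in>Ed. 1/2 * ((1 / N) * (fit r S (snd p) / Sf (fst p))))"
      using Ed_swap[of "\<lambda>p. 1/2 * ((1 / N) * (fit r S (fst p) / Sf (snd p)))"] by simp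
    also have "\<dots> = (\<Sum>v\<in>V. \<Sum>u\<in>{w\<in>V. E v w}. 1/2 * ((1 / N) * (fit r S u / Sf v)))"
      by (simp only: sum_Ed fst_conv snd_conv)
    also have "\<dots> = (\<Sum>v\<in>V. 1/(2*N))"
    proof (intro sum.cong refl)
      fix v assume "v \<in> V"
      have "(\<Sum>u\<in>{w\<in>V. E v w}. 1/2 * ((1 / N) * (fit r S u / Sf v)))
          = (\<Sum>u\<in>{w\<in>V. E v w}. (1 / (2 * N * Sf v)) * fit r S u)"
        by (intro sum.cong refl) simp
      also have "\<dots> = (1 / (2 * N * Sf v)) * Sf v"
        unfolding Sf_def by (simp only: sum_distrib_left[symmetric])
      also have "\<dots> = 1/(2*N)" using Sfpos[OF \<open>v \<in> V\<close>] by simp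
      finally show "(\<Sum>u\<in>{w\<in>V. E v w}. 1/2 * ((1 / N) * (fit r S u / Sf v))) = 1/(2*N)" .
    qed
    also have "\<dots> = 1/2" using Npos unfolding N_def by simp
    finally show ?thesis .
  qed
  have B: "(\<Sum>p\<in>Ed. 1/2 * ((fit r S (fst p) / F) * (1 / d (fst p)))) = 1/2"
  proof -
    have "(\<Sum>p\<in>Ed. 1/2 * ((fit r S (fst p) / F) * (1 / d (fst p))))
        = (\<Sum>u\<in>V. \<Sum>v\<in>{w\<in>V. E u w}. 1/2 * ((fit r S u / F) * (1 / d u)))"
      by (simp only: sum_Ed fst_conv snd_conv)
    also have "\<dots> = (\<Sum>u\<in>V. (1 / (2 * F)) * fit r S u)"
    proof (intro sum.cong refl)
      fix u assume "u \<in> V"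
      have "(\<Sum>v\<in>{w\<in>V. E u w}. 1/2 * ((fit r S u / F) * (1 / d u))) = d u * (1/2 * ((fit r S u / F) * (1 / d u)))"
        unfolding d_def by simp
      also have "\<dots> = (1 / (2 * F)) * fit r S u" using dpos[OF \<open>u \<in> V\<close>] by simp
      finally show "(\<Sum>v\<in>{w\<in>V. E u w}. 1/2 * ((fit r S u / F) * (1 / d u))) = (1 / (2 * F)) * fit r S u" .
    qed
    also have "\<dots> = (1 / (2 * F)) * F" unfolding F_def by (simp only: sum_distrib_left[symmetric])
    also have "\<dots> = 1/2" using Fpos by simp
    finally show ?thesis .
  qed
  have "(\<Sum>p\<in>Ed. pair_prob V E r (1/2) S (fst p) (snd p)) =
     (\<Sum>p\<in>Ed. 1/2 * ((1 / N) * (fit r S (fst p) / Sf (snd p)))) +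
     (\<Sum>p\<in>Ed. 1/2 * ((fit r S (fst p) / F) * (1 / d (fst p))))"
    unfolding pp by (simp only: sum.distrib)
  then show ?thesis using A B by simp
qed

lemma pp_nn: "0 \<le> pair_prob V E r \<delta> (S :: 'a set) u v" if "0 \<le> \<delta>" "\<delta> \<le> 1"
  unfolding pair_prob_def using that fit_pos
  by (intro add_nonneg_nonneg mult_nonneg_nonneg divide_nonneg_nonneg sum_nonneg) (auto intro: less_imp_le)

lemma tp_nn: "0 \<le> trans_prob V E r (1/2) (S::'a set) S'"
proof -
  have h: "0 \<le> (case x of (u, v) \<Rightarrow> if copy_type S u v = S' then pair_prob V E r (1/2) S u v else 0)" for x
    by (cases x) (simp add: pp_nn)
  show ?thesis unfolding trans_prob_def using h by (simp add: sum_nonneg)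
qed

lemma edge_bound:
  assumes "S \<subseteq> V" "u \<in> S" "v \<in> V" "v \<notin> S" "E u v"
  shows "(r - 1) / (r * real (card V) ^ 3) \<le>
     pair_prob V E r (1/2) S u v - pair_prob V E r (1/2) S v u"
proof -
  let ?N = "real (card V)"
  let ?F = "\<Sum>w\<in>V. fit r S w"
  let ?Sf = "\<lambda>v. \<Sum>w\<in>{w\<in>V. E v w}. fit r S w"
  let ?d = "\<lambda>u. real (card {w\<in>V. E u w})"
  have uV: "u \<in> V" using assms by auto
  have fu: "fit r S u = r" using assms unfolding fit_def by simp
  have fv: "fit r S v = 1" using assms unfolding fit_def by simp
  have uv: "u \<noteq> v" using assms by auto
  have "card {u, v} \<le> card V" using uV assms(3) finV by (intro card_mono) auto
  then have N2: "?N \<ge> 2" using uv by simp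
  have NF: "?N \<le> ?F" using sum_mono[of V "\<lambda>_. 1" "fit r S"] fit_ge1 by simp
  have FN: "?F \<le> r * ?N" using sum_mono[of V "fit r S" "\<lambda>_. r"] fit_ler by (simp add: mult.commute)
  have dge: "1 \<le> ?d x" if "E x y" for x y
  proof -
    have "y \<in> {w\<in>V. E x w}" using that EV by auto
    then have "card {w\<in>V. E x w} \<noteq> 0" using finnb by auto
    then show ?thesis by simp
  qed
  have dle: "?d x \<le> ?N - 1" if "x \<in> V" for x
  proof -
    have "{w\<in>V. E x w} \<subseteq> V - {x}" using Eirr by auto
    then have "card {w\<in>V. E x w} \<le> card (V - {x})" using finV by (intro card_mono) auto
    also have "\<dots> = card V - 1" using that finV by simp
    finally have "card {w\<in>V. E x w} \<le> card V - 1" .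
    moreover have "card V \<ge> 1" using that finV by (metis card_0_eq empty_iff less_one not_le)
    ultimately show ?thesis by (simp add: of_nat_diff)
  qed
  have dsu: "?d x \<le> ?Sf x" for x
    using sum_mono[of "{w\<in>V. E x w}" "\<lambda>_. 1" "fit r S"] fit_ge1 by simp
  have svp: "0 < ?Sf v"
  proof -
    have "u \<in> {w\<in>V. E v w}" using assms Esym uV by auto
    then have "{w\<in>V. E v w} \<noteq> {}" by auto
    then show ?thesis using finnb fit_pos by (intro sum_pos) auto
  qed
  have svr: "?Sf v \<le> r * ?d v"
    using sum_mono[of "{w\<in>V. E v w}" "fit r S" "\<lambda>_. r"] fit_ler by (simp add: mult.commute)
  have "(r - 1) / (r * ?N ^ 3) \<le> 1/2*((1/?N)*(r/?Sf v)) + (1 - 1/2)*((r/?F)*(1/?d u))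
       - (1/2*((1/?N)*(1/?Sf u)) + (1 - 1/2)*((1/?F)*(1/?d v)))"
    using assms Esym by (intro alg' r1 N2 NF FN dge dle dsu svp svr uV) auto
  then show ?thesis unfolding pair_prob_def fu fv .
qed

lemma copy_card:
  assumes "S \<subseteq> V" "u \<in> V" "v \<in> V"
  shows "real (card (copy_type S u v)) = real (card S) +
    ((if u \<in> S \<and> v \<notin> S then 1 else 0) - (if u \<notin> S \<and> v \<in> S then 1 else 0))"
proof -
  have fS: "finite S" using assms finV by (metis finite_subset)
  show ?thesis
  proof (cases "u \<in> S")
    case True then show ?thesis using fS by (cases "v \<in> S") (auto simp: copy_type_def insert_absorb)
  next
    case False
    show ?thesis
    proof (cases "v \<in> S")
      case True
      then have "card S \<ge> 1" using fS by (metis One_nat_def Suc_leI card_gt_0_iff empty_iff)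
      then show ?thesis using False True fS by (simp add: copy_type_def card_Diff_singleton of_nat_diff)
    next
      case F2: False
      then show ?thesis using False fS by (simp add: copy_type_def)
    qed
  qed
qed

lemma drift:
  assumes "S \<subseteq> V" "S \<noteq> {}" "S \<noteq> V"
  shows "real (card S) + (r - 1) / (r * real (card V) ^ 3) \<le>
    (\<Sum>S'\<in>Pow V. trans_prob V E r (1/2) S S' * real (card S'))"
proof -
  let ?pp = "\<lambda>p. pair_prob V E r (1/2) S (fst p) (snd p)"
  let ?e = "(r - 1) / (r * real (card V) ^ 3)"
  let ?h = "\<lambda>p. if fst p \<in> S \<and> snd p \<notin> S then ?pp p - pair_prob V E r (1/2) S (snd p) (fst p) else 0"
  have "(\<Sum>S'\<in>Pow V. trans_prob V E r (1/2) S S' * real (card S')) =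
     (\<Sum>p\<in>Ed. ?pp p * real (card (copy_type S (fst p) (snd p))))"
    using Pkey[OF assms] .
  also have "\<dots> = (\<Sum>p\<in>Ed. ?pp p * real (card S) + ((if fst p \<in> S \<and> snd p \<notin> S then ?pp p else 0)
        - (if fst p \<notin> S \<and> snd p \<in> S then ?pp p else 0)))"
  proof (intro sum.cong refl)
    fix p assume "p \<in> Ed"
    then have "fst p \<in> V" "snd p \<in> V" unfolding Ed_def by auto
    from copy_card[OF assms(1) this]
    show "?pp p * real (card (copy_type S (fst p) (snd p))) = ?pp p * real (card S) + ((if fst p \<in> S \<and> snd p \<notin> S then ?pp p else 0)
        - (if fst p \<notin> S \<and> snd p \<in> S then ?pp p else 0))"
      by (cases "fst p \<in> S"; cases "snd p \<in> S"; simp add: distrib_left right_diff_distrib)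
  qed
  also have "\<dots> = real (card S) + ((\<Sum>p\<in>Ed. if fst p \<in> S \<and> snd p \<notin> S then ?pp p else 0)
        - (\<Sum>p\<in>Ed. if fst p \<notin> S \<and> snd p \<in> S then ?pp p else 0))"
    by (simp add: sum.distrib sum_subtractf sum_distrib_right[symmetric] pp_sum[OF assms])
  also have "(\<Sum>p\<in>Ed. if fst p \<notin> S \<and> snd p \<in> S then ?pp p else 0) =
      (\<Sum>p\<in>Ed. if fst p \<in> S \<and> snd p \<notin> S then pair_prob V E r (1/2) S (snd p) (fst p) else 0)"
    by (subst Ed_swap) (auto intro: sum.cong)
  also have "(\<Sum>p\<in>Ed. if fst p \<in> S \<and> snd p \<notin> S then ?pp p else 0) -
      (\<Sum>p\<in>Ed. if fst p \<in> S \<and> snd p \<notin> S then pair_prob V E r (1/2) S (snd p) (fst p) else 0)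
      = sum ?h Ed"
    by (simp add: sum_subtractf[symmetric] if_distrib cong: if_cong)
  finally have eq: "(\<Sum>S'\<in>Pow V. trans_prob V E r (1/2) S S' * real (card S')) = real (card S) + sum ?h Ed" .
  obtain x y where xy: "x \<in> S" "y \<in> V" "y \<notin> S" using assms by auto
  have "x \<in> V" using xy assms by auto
  obtain u v where uv: "u \<in> S" "v \<notin> S" "E u v" using crossing[OF xy(1) xy(3) conn[OF \<open>x \<in> V\<close> xy(2)]] by blast
  have vV: "v \<in> V" using uv EV by auto
  have uvEd: "(u, v) \<in> Ed" using uv EV unfolding Ed_def by auto
  have epos: "0 < ?e" using r1 finV Vne by (simp add: card_gt_0_iff)
  have hnn: "0 \<le> ?h p" if "p \<in> Ed" for p
    using that edge_bound[OF assms(1), of "fst p" "snd p"] epos unfolding Ed_def by auto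
  have "?e \<le> ?h (u, v)" using edge_bound[OF assms(1) uv(1) vV uv(2) uv(3)] uv by simp
  also have "\<dots> \<le> sum ?h Ed" using finEd uvEd hnn by (intro member_le_sum) auto
  finally show ?thesis using eq by simp
qed

lemma is_mchain:
  assumes "S0 \<subseteq> V"
  shows "mchain V (trans_prob V E r (1/2)) (state_dist V E r (1/2) S0) S0 ((r - 1) / (r * real (card V) ^ 3))"
proof (unfold_locales)
  show "finite V" by (rule finV)
  show "V \<noteq> {}" by (rule Vne)
  show "state_dist V E r (1/2) S0 0 S = (if S = S0 then 1 else 0)" for S by simp
  show "state_dist V E r (1/2) S0 (Suc t) S' = (\<Sum>S\<in>Pow V. state_dist V E r (1/2) S0 t S * trans_prob V E r (1/2) S S')" for t S' by simp
  show "S0 \<subseteq> V" by (rule assms)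
  show "0 \<le> trans_prob V E r (1/2) S S'" if "S \<subseteq> V" for S S'
    by (rule tp_nn)
  show "(\<Sum>S'\<in>Pow V. trans_prob V E r (1/2) S S') = 1" if "S \<subseteq> V" for S
  proof (cases "S = {} \<or> S = V")
    case True
    then have "(\<Sum>S'\<in>Pow V. trans_prob V E r (1/2) S S') = (\<Sum>S'\<in>Pow V. if S' = S then 1 else 0)"
      by (intro sum.cong refl) (auto simp: trans_prob_def)
    also have "\<dots> = 1" using that finV by simp
    finally show ?thesis .
  next
    case False
    then show ?thesis using Pkey[OF that, of "\<lambda>_. 1"] pp_sum[OF that] by simp
  qed
  show "trans_prob V E r (1/2) V S' = (if S' = V then 1 else 0)" for S' by (simp add: trans_prob_def)
  show "trans_prob V E r (1/2) {} S' = (if S' = {} then 1 else 0)" for S' by (simp add: trans_prob_def)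
  show "real (card S) + (r - 1) / (r * real (card V) ^ 3) \<le> (\<Sum>S'\<in>Pow V. trans_prob V E r (1/2) S S' * real (card S'))"
    if "S \<subseteq> V" "S \<noteq> {}" "S \<noteq> V" for S using drift that by blast
  show "0 < (r - 1) / (r * real (card V) ^ 3)" using r1 finV Vne by (simp add: card_gt_0_iff)
qed

end

theorem mainTheorem3:
  fixes V :: "'a set" and E :: "'a \<Rightarrow> 'a \<Rightarrow> bool" and r :: real
  assumes "connected_graph V E" and "r > 1"
  shows "FT_graph V E r (1/2) \<le> ennreal (r / (r - 1) * real (card V) ^ 5)"
proof -
  let ?N = "real (card V)"
  let ?e = "(r - 1) / (r * ?N ^ 3)"
  have Npos: "?N > 0" using finV[OF assms] Vne[OF assms] by (simp add: card_gt_0_iff)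
  show ?thesis unfolding FT_graph_def
  proof (rule SUP_least)
    fix S0 assume "S0 \<in> {S0. S0 \<subseteq> V \<and> S0 \<noteq> {}}"
    then have S0: "S0 \<subseteq> V" "S0 \<noteq> {}" by auto
    interpret M: mchain V "trans_prob V E r (1/2)" "state_dist V E r (1/2) S0" S0 ?e
      by (rule is_mchain[OF assms S0(1)])
    have fa: "fix_at V E r (1/2) S0 t = M.fixat t" for t unfolding fix_at_def M.fixat_def by simp
    have "FT V E r (1/2) S0 = (\<Sum>t. ennreal (real t * M.fixat t)) / fix_prob V E r (1/2) S0"
      unfolding FT_def fa ..
    also have "\<dots> \<le> ennreal (?N / ?e) / fix_prob V E r (1/2) S0"
      by (rule divide_right_mono_ennreal[OF M.G1])
    also have "\<dots> \<le> ennreal (?N / ?e) / ennreal (1 / ?N)"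
      by (rule div_anti) (use M.G2[OF S0(2)] Npos in \<open>auto simp: fix_prob_def\<close>)
    also have "\<dots> = ennreal ((?N / ?e) / (1 / ?N))"
      using Npos assms(2) by (intro divide_ennreal) auto
    also have "(?N / ?e) / (1 / ?N) = r / (r - 1) * ?N ^ 5"
    proof -
      have "(?N / ?e) / (1 / ?N) = r / (r - 1) * (?N * ?N * ?N ^ 3)"
        using Npos assms(2) by (simp add: field_simps)
      also have "?N * ?N * ?N ^ 3 = ?N ^ 5" by (simp add: power_def numeral_eq_Suc)
      finally show ?thesis .
    qed
    finally show "FT V E r (1/2) S0 \<le> ennreal (r / (r - 1) * ?N ^ 5)" .
  qed
qed

end
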